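(* Let $F:\mathbb{R}^d\to\mathbb{R}$ be continuously differentiable with $L$-Lipschitz gradient and strongly convex with parameter $c>0$, i.e. $F(\bar w)\ge F(w)+\nabla F(w)^\top(\bar w-w)+\tfrac c2\|\bar w-w\|_2^2$ for all $w,\bar w$; let $w_*$ be its unique minimizer and $F_*=F(w_* )$. Consider the low-precision SGD iteration $w_{k+1}=w_k-\alpha_k\,\tilde g(w_k,\xi_k)$ with $\tilde g(w_k,\xi_k)=q_k\,g(w_k,\xi_k)+\varepsilon_k$. Assume: (a) the iterates lie in an open set on which $F$ is bounded below by $F_{\inf}=F_*$; (b) there exist scalars $\mu_G\ge\mu>0$ such that for all $k$, $\nabla F(w_k)^\top\mathbb{E}_{\xi_k}[\tilde g(w_k,\xi_k)]\ge q_{\min}\mu\|\nabla F(w_k)\|_2^2$ and $\|\mathbb{E}_{\xi_k}[\tilde g(w_k,\xi_k)]\|_2\le q_{\max}\mu_G\|\nabla F(w_k)\|_2$; (c) there exist scalars $\tilde M\ge0$, $\tilde M_V\ge0$ such that for all $k$, $\mathbb{E}_{\xi_k}\|\tilde g(w_k,\xi_k)\|_2^2-\|\mathbb{E}_{\xi_k}[\tilde g(w_k,\xi_k)]\|_2^2\le\tilde M+\tilde M_V\|\nabla F(w_k)\|_2^2$. Let $\mu_q:=q_{\min}\mu$, $\tilde M_G:=\tilde M_V+q_{\max}^2\mu_G^2$, and let the stepsizes be $\alpha_k=\frac{\beta}{\gamma+k}$ with $\beta>\frac{1}{c\mu_q}$, $\gamma>0$, such that $\alpha_1\le\frac{\mu_q}{L\tilde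 M_G}$. Then for all $k\in\mathbb{N}$, \[ \mathbb{E}[F(w_k)-F_*]\le\frac{\nu_q}{\gamma+k},\qquad \nu_q:=\max\Big\{\frac{\beta^2L\tilde M}{2(\beta c\mu_q-1)},\;(\gamma+1)(F(w_1)-F_* )\Big\}. \]
   Context: The objective is $F(w)=\mathbb{E}_{\xi\sim\mathcal D}[\ell(\xi,w)]$, $w_1$ is a given initial point. At iteration $k$, $\xi_k$ is drawn i.i.d. from $\mathcal D$, $g(w_k,\xi_k)=\nabla F(w_k;\xi_k)$, $q_k\in[q_{\min},q_{\max}]\subset(0,1]$ with $q_{\min}>0$ is a shrinkage factor, and $\varepsilon_k$ is quantization noise with $\mathbb{E}[\varepsilon_k\mid\mathcal F_k]=0$ and $\mathbb{E}\|\varepsilon_k\|_2^2\le\sigma_\varepsilon^2$, $\mathcal F_k$ being the $\sigma$-algebra of all randomness up to iteration $k$. $\mathbb{E}_{\xi_k}[\cdot]$ denotes expectation over $(\xi_k,q_k,\varepsilon_k)$ conditional on $w_k$, and $\mathbb{E}[\cdot]$ is total expectation over all randomness. *)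

theory Defs
  imports "HOL-Probability.Probability"
begin

definition cond_exp_vec :: "'a measure \<Rightarrow> 'a measure \<Rightarrow> ('a \<Rightarrow> 'v::euclidean_space) \<Rightarrow> 'a \<Rightarrow> 'v" where
  "cond_exp_vec M G f = (\<lambda>x. \<Sum>b\<in>Basis. real_cond_exp M G (\<lambda>y. f y \<bullet> b) x *\<^sub>R b)"

end

theory Submission
  imports Defs
begin

lemma descent_lemma:
  fixes F :: "'v::real_inner \<Rightarrow> real" and gradF :: "'v \<Rightarrow> 'v"
  assumes F_deriv: "\<And>x. (F has_derivative (\<lambda>h. gradF x \<bullet> h)) (at x)"
    and gradF_Lip: "\<And>x y. norm (gradF x - gradF y) \<le> L * norm (x - y)"
  shows "F y \<le> F x + gradF x \<bullet> (y - x) + L / 2 * (norm (y - x))\<^sup>2"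
proof -
  define h where "h = y - x"
  define \<phi> where "\<phi> t = F (x + t *\<^sub>R h) - t * (gradF x \<bullet> h) - L / 2 * t\<^sup>2 * (norm h)\<^sup>2" for t
  have d: "(\<phi> has_real_derivative (gradF (x + t *\<^sub>R h) \<bullet> h - gradF x \<bullet> h - L * t * (norm h)\<^sup>2)) (at t)" for t
  proof -
    have l: "((\<lambda>t. x + t *\<^sub>R h) has_derivative (\<lambda>s. s *\<^sub>R h)) (at t)"
      by (auto intro!: derivative_eq_intros)
    have "((\<lambda>t. F (x + t *\<^sub>R h)) has_derivative (\<lambda>s. gradF (x + t *\<^sub>R h) \<bullet> (s *\<^sub>R h))) (at t)"
      using has_derivative_compose[OF l F_deriv] by simp
    then have "((\<lambda>t. F (x + t *\<^sub>R h)) has_real_derivative (gradF (x + t *\<^sub>R h) \<bullet> h)) (at t)"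
      unfolding has_field_derivative_def
      by (rule has_derivative_eq_rhs) (auto simp: mult.commute)
    then show ?thesis unfolding \<phi>_def
      by (auto intro!: derivative_eq_intros simp: power2_eq_square)
  qed
  have nonpos: "gradF (x + t *\<^sub>R h) \<bullet> h - gradF x \<bullet> h - L * t * (norm h)\<^sup>2 \<le> 0" if "0 \<le> t" for t
  proof -
    have "gradF (x + t *\<^sub>R h) \<bullet> h - gradF x \<bullet> h = (gradF (x + t *\<^sub>R h) - gradF x) \<bullet> h"
      by (simp add: inner_diff_left)
    also have "\<dots> \<le> norm (gradF (x + t *\<^sub>R h) - gradF x) * norm h"
      by (rule norm_cauchy_schwarz)
    also have "\<dots> \<le> (L * norm (t *\<^sub>R h)) * norm h"
      using gradF_Lip[of "x + t *\<^sub>R h" x] by (intro mult_right_mono) auto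
    also have "\<dots> = L * t * (norm h)\<^sup>2" using that by (simp add: power2_eq_square)
    finally show ?thesis by simp
  qed
  have "\<phi> 1 \<le> \<phi> 0"
  proof (rule DERIV_nonpos_imp_nonincreasing[of 0 1 \<phi>])
    fix t :: real assume "0 \<le> t" "t \<le> 1"
    then show "\<exists>y. (\<phi> has_real_derivative y) (at t) \<and> y \<le> 0"
      using d[of t] nonpos[of t] by (intro exI[of _ "gradF (x + t *\<^sub>R h) \<bullet> h - gradF x \<bullet> h - L * t * (norm h)\<^sup>2"]) simp
  qed simp
  then show ?thesis unfolding \<phi>_def h_def by simp
qed


lemma quad_lb:
  fixes g h :: "'v::real_inner" and c :: real
  assumes "c > 0"
  shows "- (norm g)\<^sup>2 \<le> 2 * c * (g \<bullet> h) + c\<^sup>2 * (norm h)\<^sup>2"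
proof -
  have "0 \<le> (norm (c *\<^sub>R h + g))\<^sup>2" by simp
  also have "\<dots> = c\<^sup>2 * (norm h)\<^sup>2 + 2 * c * (g \<bullet> h) + (norm g)\<^sup>2"
    unfolding power2_norm_eq_inner
    by (simp add: inner_add_left inner_add_right inner_commute power2_eq_square algebra_simps)
  finally show ?thesis by simp
qed

lemma norm_diff_sq_le:
  fixes a b :: "'v::real_normed_vector"
  shows "(norm (a - b))\<^sup>2 \<le> 2 * (norm a)\<^sup>2 + 2 * (norm b)\<^sup>2"
proof -
  have "(norm (a - b))\<^sup>2 \<le> (norm a + norm b)\<^sup>2"
    by (intro power_mono norm_triangle_ineq4) simp
  also have "\<dots> \<le> 2 * (norm a)\<^sup>2 + 2 * (norm b)\<^sup>2"
    using sum_squares_ge_zero[of "norm a - norm b" 0]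
    by (simp add: power2_eq_square algebra_simps)
  finally show ?thesis .
qed

lemma recur_step:
  fixes e e' K a beta c m L Mt nu :: real
  assumes K: "K > 0" and a: "a = beta / K" and nn: "0 \<le> 1 - a * c * m"
    and bc: "beta * c * m > 1"
    and nu1: "beta\<^sup>2 * L * Mt / (2 * (beta * c * m - 1)) \<le> nu" and nu0: "0 \<le> nu"
    and e: "e \<le> nu / K" and e': "e' \<le> (1 - a * c * m) * e + L * a\<^sup>2 * Mt / 2"
  shows "e' \<le> nu / (K + 1)"
proof -
  have d: "2 * (beta * c * m - 1) > 0" using bc by simp
  have "beta\<^sup>2 * L * Mt \<le> nu * (2 * (beta * c * m - 1))" using nu1 d by (simp add: pos_divide_le_eq)
  then have "beta\<^sup>2 * L * Mt \<le> 2 * (nu * (beta * c * m - 1))" by (simp add: algebra_simps)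
  then have h2: "beta\<^sup>2 * L * Mt / 2 \<le> nu * (beta * c * m - 1)" by simp
  have "e' \<le> (1 - a * c * m) * (nu / K) + L * a\<^sup>2 * Mt / 2"
    using e' mult_left_mono[OF e nn] by linarith
  also have "L * a\<^sup>2 * Mt / 2 = (beta\<^sup>2 * L * Mt / 2) / K\<^sup>2"
    using a by (simp add: power_divide mult_ac)
  also have "\<dots> \<le> nu * (beta * c * m - 1) / K\<^sup>2"
    using divide_right_mono[OF h2, of "K\<^sup>2"] by simp
  also have "(1 - a * c * m) * (nu / K) + nu * (beta * c * m - 1) / K\<^sup>2 = nu * (K - 1) / K\<^sup>2"
    using K a by (simp add: field_simps power2_eq_square)
  also have "\<dots> \<le> nu / (K + 1)"
  proof -
    have "nu * (K - 1) * (K + 1) \<le> nu * K\<^sup>2"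
      using nu0 by (simp add: mult_left_mono power2_eq_square algebra_simps)
    then show ?thesis using K by (simp add: field_simps)
  qed
  finally show ?thesis by simp
qed

theorem theorem2:
  fixes F :: "'v::euclidean_space \<Rightarrow> real"
    and gradF :: "'v \<Rightarrow> 'v"
    and L c :: real
    and wstar :: 'v
    and D :: "'b measure" and ell :: "'b \<Rightarrow> 'v \<Rightarrow> real" and g :: "'v \<Rightarrow> 'b \<Rightarrow> 'v"
    and M :: "'a measure" and Fk :: "nat \<Rightarrow> 'a measure"
    and xi :: "nat \<Rightarrow> 'a \<Rightarrow> 'b" and q :: "nat \<Rightarrow> 'a \<Rightarrow> real" and eps :: "nat \<Rightarrow> 'a \<Rightarrow> 'v"
    and qmin qmax sigma_eps :: real
    and w :: "nat \<Rightarrow> 'a \<Rightarrow> 'v" and w1 :: 'v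
    and alpha :: "nat \<Rightarrow> real" and beta gamma :: real
    and mu muG Mt MV :: real
  defines "gt \<equiv> (\<lambda>k \<omega>. q k \<omega> *\<^sub>R g (w k \<omega>) (xi k \<omega>) + eps k \<omega>)"
    and "Fstar \<equiv> F wstar"
    and "mu_q \<equiv> qmin * mu"
    and "MG \<equiv> MV + qmax\<^sup>2 * muG\<^sup>2"
    and "nu_q \<equiv> max ((beta\<^sup>2 * L * Mt) / (2 * (beta * c * (qmin * mu) - 1))) ((gamma + 1) * (F w1 - F wstar))"
  assumes
    \<comment> \<open>F is continuously differentiable with L-Lipschitz gradient\<close>
    F_deriv: "\<And>x. (F has_derivative (\<lambda>h. gradF x \<bullet> h)) (at x)"
    and gradF_cont: "continuous_on UNIV gradF"
    and gradF_Lip: "\<And>x y. norm (gradF x - gradF y) \<le> L * norm (x - y)"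
    \<comment> \<open>strong convexity with parameter c > 0\<close>
    and c_pos: "c > 0"
    and strongly_convex: "\<And>x y. F y \<ge> F x + gradF x \<bullet> (y - x) + c / 2 * (norm (y - x))\<^sup>2"
    \<comment> \<open>wstar is the unique minimizer\<close>
    and wstar_min: "\<And>x. x \<noteq> wstar \<Longrightarrow> F wstar < F x"
    \<comment> \<open>standing setting: F is the expectation of the loss, g its stochastic gradient\<close>
    and D_prob: "prob_space D"
    and F_expect: "\<And>x. F x = (\<integral>\<xi>. ell \<xi> x \<partial>D)"
    and ell_grad: "\<And>\<xi> x. \<xi> \<in> space D \<Longrightarrow> (ell \<xi> has_derivative (\<lambda>h. g x \<xi> \<bullet> h)) (at x)"
    and g_meas: "(\<lambda>(x, \<xi>). g x \<xi>) \<in> borel_measurable (borel \<Otimes>\<^sub>M D)"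
    \<comment> \<open>probability space and filtration (randomness up to iteration k)\<close>
    and M_prob: "prob_space M"
    and Fk_sub: "\<And>k. sigma_finite_subalgebra M (Fk k)"
    and Fk_mono: "\<And>k. sets (Fk k) \<subseteq> sets (Fk (Suc k))"
    \<comment> \<open>xi_k i.i.d. from D, drawn at iteration k\<close>
    and xi_meas: "\<And>k. xi k \<in> measurable (Fk (Suc k)) D"
    and xi_distr: "\<And>k. distr M D (xi k) = D"
    and xi_indep: "prob_space.indep_vars M (\<lambda>_. D) xi UNIV"
    \<comment> \<open>shrinkage factors\<close>
    and qmin_pos: "qmin > 0" and qmin_le_qmax: "qmin \<le> qmax" and qmax_le1: "qmax \<le> 1"
    and q_meas: "\<And>k. q k \<in> borel_measurable (Fk (Suc k))"
    and q_bounds: "\<And>k \<omega>. \<omega> \<in> space M \<Longrightarrow> qmin \<le> q k \<omega> \<and> q k \<omega> \<le> qmax"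
    \<comment> \<open>quantization noise\<close>
    and eps_meas: "\<And>k. eps k \<in> borel_measurable (Fk (Suc k))"
    and eps_sq_int: "\<And>k. integrable M (\<lambda>\<omega>. (norm (eps k \<omega>))\<^sup>2)"
    and eps_mean0: "\<And>k. AE \<omega> in M. cond_exp_vec M (Fk k) (eps k) \<omega> = 0"
    and eps_var: "\<And>k. (\<integral>\<omega>. (norm (eps k \<omega>))\<^sup>2 \<partial>M) \<le> sigma_eps\<^sup>2"
    \<comment> \<open>the iteration\<close>
    and w_init: "\<And>\<omega>. \<omega> \<in> space M \<Longrightarrow> w 1 \<omega> = w1"
    and w_step: "\<And>k \<omega>. k \<ge> 1 \<Longrightarrow> \<omega> \<in> space M \<Longrightarrow> w (Suc k) \<omega> = w k \<omega> - alpha k *\<^sub>R gt k \<omega>"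
    and gt_sq_int: "\<And>k. k \<ge> 1 \<Longrightarrow> integrable M (\<lambda>\<omega>. (norm (gt k \<omega>))\<^sup>2)"
    \<comment> \<open>(a)\<close>
    and assm_a: "\<exists>S. open S \<and> (\<forall>k \<ge> 1. \<forall>\<omega> \<in> space M. w k \<omega> \<in> S) \<and> (\<forall>x \<in> S. F x \<ge> Fstar)"
    \<comment> \<open>(b)\<close>
    and mu_pos: "mu > 0" and mu_le_muG: "mu \<le> muG"
    and assm_b1: "\<And>k. k \<ge> 1 \<Longrightarrow> AE \<omega> in M.
        gradF (w k \<omega>) \<bullet> cond_exp_vec M (Fk k) (gt k) \<omega> \<ge> qmin * mu * (norm (gradF (w k \<omega>)))\<^sup>2"
    and assm_b2: "\<And>k. k \<ge> 1 \<Longrightarrow> AE \<omega> in M.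
        norm (cond_exp_vec M (Fk k) (gt k) \<omega>) \<le> qmax * muG * norm (gradF (w k \<omega>))"
    \<comment> \<open>(c)\<close>
    and Mt_nonneg: "Mt \<ge> 0" and MV_nonneg: "MV \<ge> 0"
    and assm_c: "\<And>k. k \<ge> 1 \<Longrightarrow> AE \<omega> in M.
        real_cond_exp M (Fk k) (\<lambda>\<omega>'. (norm (gt k \<omega>'))\<^sup>2) \<omega>
          - (norm (cond_exp_vec M (Fk k) (gt k) \<omega>))\<^sup>2
        \<le> Mt + MV * (norm (gradF (w k \<omega>)))\<^sup>2"
    \<comment> \<open>stepsizes\<close>
    and alpha_def: "\<And>k. alpha k = beta / (gamma + real k)"
    and beta_gt: "beta > 1 / (c * mu_q)"
    and gamma_pos: "gamma > 0"
    and alpha1_le: "alpha 1 \<le> mu_q / (L * MG)"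
  shows "\<forall>k \<ge> 1. (\<integral>\<omega>. F (w k \<omega>) - Fstar \<partial>M) \<le> nu_q / (gamma + real k)"
proof -
  interpret P: prob_space M by (rule M_prob)
  have sub: "subalgebra M (Fk k)" for k
    using Fk_sub[of k] sigma_finite_subalgebra.subalg by blast
  have spF: "space (Fk k) = space M" for k using sub[of k] unfolding subalgebra_def by simp
  have subS: "subalgebra (Fk (Suc k)) (Fk k)" for k
    unfolding subalgebra_def using Fk_mono[of k] spF by simp
  have Fcont: "continuous_on UNIV F"
    using F_deriv has_derivative_continuous continuous_at_imp_continuous_on by blast
  have Fborel: "F \<in> borel_measurable borel" by (rule borel_measurable_continuous_onI[OF Fcont])
  have Gborel: "gradF \<in> borel_measurable borel" by (rule borel_measurable_continuous_onI[OF gradF_cont])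
  have desc: "\<And>x y. F y \<le> F x + gradF x \<bullet> (y - x) + L / 2 * (norm (y - x))\<^sup>2"
    by (rule descent_lemma[OF F_deriv gradF_Lip])
  have Fmin: "F wstar \<le> F x" for x
    using wstar_min[of x] by (cases "x = wstar") auto
  obtain b0 :: 'v where b0: "b0 \<in> Basis" using nonempty_Basis by blast
  have cL: "c \<le> L"
  proof -
    have s1: "F 0 \<ge> F b0 + gradF b0 \<bullet> (0 - b0) + c / 2 * (norm (0 - b0))\<^sup>2" by (rule strongly_convex)
    have s2: "F b0 \<ge> F 0 + gradF 0 \<bullet> (b0 - 0) + c / 2 * (norm (b0 - 0))\<^sup>2" by (rule strongly_convex)
    have n1: "norm b0 = 1" using b0 by simp
    have "c \<le> (gradF b0 - gradF 0) \<bullet> b0" using s1 s2 n1 by (simp add: inner_diff_left)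
    also have "\<dots> \<le> norm (gradF b0 - gradF 0) * norm b0" by (rule norm_cauchy_schwarz)
    also have "\<dots> \<le> L * norm (b0 - 0) * norm b0" using gradF_Lip[of b0 0] n1 by simp
    finally show ?thesis using n1 by simp
  qed
  have Lpos: "L > 0" using cL c_pos by simp
  have grad0: "gradF wstar = 0"
  proof -
    define gs where "gs = gradF wstar"
    have "F wstar \<le> F (wstar - (1 / L) *\<^sub>R gs)" by (rule Fmin)
    also have "\<dots> \<le> F wstar + gs \<bullet> (- ((1 / L) *\<^sub>R gs)) + L / 2 * (norm (- ((1 / L) *\<^sub>R gs)))\<^sup>2"
      using descent_lemma[OF F_deriv gradF_Lip, where x=wstar and y="wstar - (1 / L) *\<^sub>R gs"] unfolding gs_def[symmetric] by simp
    also have "\<dots> = F wstar - (norm gs)\<^sup>2 / (2 * L)"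
      using Lpos by (simp add: power2_norm_eq_inner[symmetric] power_mult_distrib power2_eq_square field_simps)
    finally have "(norm gs)\<^sup>2 / (2 * L) \<le> 0" by simp
    then have "(norm gs)\<^sup>2 \<le> 0" using Lpos by (simp add: divide_le_0_iff)
    then show ?thesis unfolding gs_def by simp
  qed
  have Fup: "F x - Fstar \<le> L / 2 * (norm (x - wstar))\<^sup>2" for x
    using descent_lemma[OF F_deriv gradF_Lip, where x=wstar and y=x] grad0 unfolding Fstar_def by simp
  have Flow: "0 \<le> F x - Fstar" for x using Fmin[of x] unfolding Fstar_def by simp
  have Gup: "(norm (gradF x))\<^sup>2 \<le> L\<^sup>2 * (norm (x - wstar))\<^sup>2" for x
  proof -
    have "norm (gradF x) \<le> L * norm (x - wstar)" using gradF_Lip[of x wstar] grad0 by simp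
    then have "(norm (gradF x))\<^sup>2 \<le> (L * norm (x - wstar))\<^sup>2" by (intro power_mono) auto
    then show ?thesis by (simp add: power_mult_distrib)
  qed
  have PL: "2 * c * (F x - Fstar) \<le> (norm (gradF x))\<^sup>2" for x
  proof -
    have s: "F wstar \<ge> F x + gradF x \<bullet> (wstar - x) + c / 2 * (norm (wstar - x))\<^sup>2"
      by (rule strongly_convex)
    have q: "- (norm (gradF x))\<^sup>2 \<le> 2 * c * (gradF x \<bullet> (wstar - x)) + c\<^sup>2 * (norm (wstar - x))\<^sup>2"
      by (rule quad_lb[OF c_pos])
    have "2 * c * (F x - Fstar) \<le> 2 * c * (- (gradF x \<bullet> (wstar - x)) - c / 2 * (norm (wstar - x))\<^sup>2)"
      using s c_pos unfolding Fstar_def by (intro mult_left_mono) auto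
    also have "\<dots> = - (2 * c * (gradF x \<bullet> (wstar - x)) + c\<^sup>2 * (norm (wstar - x))\<^sup>2)"
      by (simp add: power2_eq_square algebra_simps)
    also have "\<dots> \<le> (norm (gradF x))\<^sup>2" using q by linarith
    finally show ?thesis .
  qed
  have muq_pos: "mu_q > 0" unfolding mu_q_def using qmin_pos mu_pos by simp
  have muq_le: "mu_q \<le> qmax * muG" unfolding mu_q_def
    using qmin_pos mu_pos qmin_le_qmax mu_le_muG by (intro mult_mono) auto
  have MG_ge: "mu_q\<^sup>2 \<le> MG"
  proof -
    have "mu_q\<^sup>2 \<le> (qmax * muG)\<^sup>2" using muq_le muq_pos by (intro power_mono) auto
    then show ?thesis unfolding MG_def using MV_nonneg by (simp add: power_mult_distrib)
  qed
  have MG_pos: "MG > 0" using MG_ge muq_pos by (smt (verit) zero_less_power)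
  have beta_pos: "beta > 0"
    using beta_gt muq_pos c_pos by (smt (verit) divide_pos_pos mult_pos_pos)
  have bcm: "beta * c * (qmin * mu) > 1"
    using beta_gt muq_pos c_pos unfolding mu_q_def by (simp add: divide_less_eq mult.commute mult.left_commute)
  have alpha_pos: "alpha k > 0" for k unfolding alpha_def using beta_pos gamma_pos by simp
  have alpha_le1: "alpha k \<le> alpha 1" if "k \<ge> 1" for k
    unfolding alpha_def using that beta_pos gamma_pos by (intro divide_left_mono) auto
  have alphaLMG: "alpha k * L * MG \<le> mu_q" if "k \<ge> 1" for k
  proof -
    have "alpha 1 * (L * MG) \<le> mu_q" using alpha1_le Lpos MG_pos by (simp add: le_divide_eq)
    moreover have "alpha k * (L * MG) \<le> alpha 1 * (L * MG)"
      using alpha_le1[OF that] Lpos MG_pos by (intro mult_right_mono) auto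
    ultimately show ?thesis by (simp add: mult.assoc)
  qed
  have alphacm: "alpha k * c * mu_q \<le> 1" if "k \<ge> 1" for k
  proof -
    have a1: "alpha k * c * mu_q \<le> alpha k * L * mu_q"
      using cL alpha_pos[of k] muq_pos by (intro mult_right_mono mult_left_mono) auto
    have "alpha k * L * mu_q * MG \<le> mu_q * mu_q"
      using alphaLMG[OF that] muq_pos by (simp add: mult.commute mult.left_commute mult_left_mono)
    also have "\<dots> \<le> MG" using MG_ge by (simp add: power2_eq_square)
    finally have "alpha k * L * mu_q \<le> 1" using MG_pos by (simp add: mult_le_cancel_right1)
    with a1 show ?thesis by simp
  qed
  have wmeas: "w k \<in> borel_measurable (Fk k)" if "k \<ge> 1" for k
    using that
  proof (induction k rule: dec_induct)
    case base
    have "(\<lambda>_. w1) \<in> borel_measurable (Fk 1)" by simp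
    then show ?case using measurable_cong[of "Fk 1" "w 1" "\<lambda>_. w1"] w_init spF by auto
  next
    case (step k)
    have wk: "w k \<in> borel_measurable (Fk (Suc k))" by (rule measurable_from_subalg[OF subS step.IH])
    have "(\<lambda>\<omega>. (w k \<omega>, xi k \<omega>)) \<in> measurable (Fk (Suc k)) (borel \<Otimes>\<^sub>M D)"
      by (rule measurable_Pair[OF wk xi_meas])
    from measurable_comp[OF this g_meas]
    have gm: "(\<lambda>\<omega>. g (w k \<omega>) (xi k \<omega>)) \<in> borel_measurable (Fk (Suc k))" by (simp add: o_def)
    have gtm: "gt k \<in> borel_measurable (Fk (Suc k))"
      unfolding gt_def using gm q_meas eps_meas by (intro borel_measurable_add borel_measurable_scaleR) auto
    have "(\<lambda>\<omega>. w k \<omega> - alpha k *\<^sub>R gt k \<omega>) \<in> borel_measurable (Fk (Suc k))"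
      using wk gtm by (intro borel_measurable_diff borel_measurable_scaleR) auto
    then show ?case using measurable_cong[of "Fk (Suc k)" "w (Suc k)" "\<lambda>\<omega>. w k \<omega> - alpha k *\<^sub>R gt k \<omega>"]
      w_step[OF step.hyps(1)] spF by auto
  qed
  have gtmeasS: "gt k \<in> borel_measurable (Fk (Suc k))" if "k \<ge> 1" for k
  proof -
    have wk: "w k \<in> borel_measurable (Fk (Suc k))" by (rule measurable_from_subalg[OF subS wmeas[OF that]])
    have "(\<lambda>\<omega>. (w k \<omega>, xi k \<omega>)) \<in> measurable (Fk (Suc k)) (borel \<Otimes>\<^sub>M D)"
      by (rule measurable_Pair[OF wk xi_meas])
    from measurable_comp[OF this g_meas]
    have gm: "(\<lambda>\<omega>. g (w k \<omega>) (xi k \<omega>)) \<in> borel_measurable (Fk (Suc k))" by (simp add: o_def)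
    show ?thesis
      unfolding gt_def using gm q_meas eps_meas by (intro borel_measurable_add borel_measurable_scaleR) auto
  qed
  have wM: "w k \<in> borel_measurable M" if "k \<ge> 1" for k
    by (rule measurable_from_subalg[OF sub wmeas[OF that]])
  have gtM: "gt k \<in> borel_measurable M" if "k \<ge> 1" for k
    by (rule measurable_from_subalg[OF sub gtmeasS[OF that]])
  have hM: "(\<lambda>\<omega>. F (w k \<omega>) - Fstar) \<in> borel_measurable M" if "k \<ge> 1" for k
    using measurable_compose[OF wM[OF that] Fborel] by simp
  have GF: "(\<lambda>\<omega>. gradF (w k \<omega>)) \<in> borel_measurable (Fk k)" if "k \<ge> 1" for k
    using measurable_compose[OF wmeas[OF that] Gborel] by simp
  have GM: "(\<lambda>\<omega>. gradF (w k \<omega>)) \<in> borel_measurable M" if "k \<ge> 1" for k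
    by (rule measurable_from_subalg[OF sub GF[OF that]])
  have dint: "integrable M (\<lambda>\<omega>. (norm (w k \<omega> - wstar))\<^sup>2)" if "k \<ge> 1" for k
    using that
  proof (induction k rule: dec_induct)
    case base
    have "integrable M (\<lambda>_. (norm (w1 - wstar))\<^sup>2)" by simp
    then show ?case using Bochner_Integration.integrable_cong[of M M "\<lambda>\<omega>. (norm (w 1 \<omega> - wstar))\<^sup>2" "\<lambda>_. (norm (w1 - wstar))\<^sup>2"]
      w_init by simp
  next
    case (step k)
    have i2: "integrable M (\<lambda>\<omega>. 2 * (norm (w k \<omega> - wstar))\<^sup>2 + 2 * (alpha k)\<^sup>2 * (norm (gt k \<omega>))\<^sup>2)"
      using step.IH gt_sq_int[OF step.hyps(1)] by (intro Bochner_Integration.integrable_add Bochner_Integration.integrable_mult_right) auto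
    show ?case
    proof (rule Bochner_Integration.integrable_bound[OF i2])
      show "(\<lambda>\<omega>. (norm (w (Suc k) \<omega> - wstar))\<^sup>2) \<in> borel_measurable M"
        using wM[of "Suc k"] using step.hyps(1) by measurable
      show "AE \<omega> in M. norm ((norm (w (Suc k) \<omega> - wstar))\<^sup>2)
          \<le> norm (2 * (norm (w k \<omega> - wstar))\<^sup>2 + 2 * (alpha k)\<^sup>2 * (norm (gt k \<omega>))\<^sup>2)"
      proof (rule AE_I2)
        fix \<omega> assume om: "\<omega> \<in> space M"
        have "w (Suc k) \<omega> - wstar = (w k \<omega> - wstar) - alpha k *\<^sub>R gt k \<omega>"
          using w_step[OF step.hyps(1) om] by simp
        then have "(norm (w (Suc k) \<omega> - wstar))\<^sup>2 \<le> 2 * (norm (w k \<omega> - wstar))\<^sup>2 + 2 * (norm (alpha k *\<^sub>R gt k \<omega>))\<^sup>2"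
          using norm_diff_sq_le by metis
        also have "(norm (alpha k *\<^sub>R gt k \<omega>))\<^sup>2 = (alpha k)\<^sup>2 * (norm (gt k \<omega>))\<^sup>2"
          by (simp add: power_mult_distrib)
        finally show "norm ((norm (w (Suc k) \<omega> - wstar))\<^sup>2)
          \<le> norm (2 * (norm (w k \<omega> - wstar))\<^sup>2 + 2 * (alpha k)\<^sup>2 * (norm (gt k \<omega>))\<^sup>2)"
          by simp
      qed
    qed
  qed
  have hint: "integrable M (\<lambda>\<omega>. F (w k \<omega>) - Fstar)" if "k \<ge> 1" for k
  proof (rule Bochner_Integration.integrable_bound[OF Bochner_Integration.integrable_mult_right[OF dint[OF that], of "L / 2"] hM[OF that]])
    show "AE \<omega> in M. norm (F (w k \<omega>) - Fstar) \<le> norm (L / 2 * (norm (w k \<omega> - wstar))\<^sup>2)"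
      using Fup Flow Lpos by (intro AE_I2) (simp add: abs_of_nonneg)
  qed
  have Gint: "integrable M (\<lambda>\<omega>. (norm (gradF (w k \<omega>)))\<^sup>2)" if "k \<ge> 1" for k
  proof (rule Bochner_Integration.integrable_bound[OF Bochner_Integration.integrable_mult_right[OF dint[OF that], of "L\<^sup>2"]])
    show "(\<lambda>\<omega>. (norm (gradF (w k \<omega>)))\<^sup>2) \<in> borel_measurable M" using GM[OF that] by measurable
    show "AE \<omega> in M. norm ((norm (gradF (w k \<omega>)))\<^sup>2) \<le> norm (L\<^sup>2 * (norm (w k \<omega> - wstar))\<^sup>2)"
      using Gup by (intro AE_I2) simp
  qed
  have onestep: "(\<integral>\<omega>. F (w (Suc k) \<omega>) - Fstar \<partial>M)
      \<le> (1 - alpha k * c * mu_q) * (\<integral>\<omega>. F (w k \<omega>) - Fstar \<partial>M) + L * (alpha k)\<^sup>2 * Mt / 2"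
    if k1: "k \<ge> 1" for k
  proof -
    define a where "a = alpha k"
    define h where "h = (\<lambda>\<omega>. F (w k \<omega>) - Fstar)"
    define h' where "h' = (\<lambda>\<omega>. F (w (Suc k) \<omega>) - Fstar)"
    define G where "G = (\<lambda>\<omega>. (norm (gradF (w k \<omega>)))\<^sup>2)"
    define ip where "ip = (\<lambda>\<omega>. gradF (w k \<omega>) \<bullet> gt k \<omega>)"
    define N where "N = (\<lambda>\<omega>. (norm (gt k \<omega>))\<^sup>2)"
    have ih: "integrable M h" unfolding h_def by (rule hint[OF k1])
    have ih': "integrable M h'" unfolding h'_def using hint[of "Suc k"] k1 by simp
    have iG: "integrable M G" unfolding G_def by (rule Gint[OF k1])
    have iN: "integrable M N" unfolding N_def by (rule gt_sq_int[OF k1])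
    have gtm: "gt k \<in> borel_measurable M" by (rule gtM[OF k1])
    have gfm: "(\<lambda>\<omega>. gradF (w k \<omega>)) \<in> borel_measurable M" by (rule GM[OF k1])
    have prodb: "\<bar>(x \<bullet> b) * (y \<bullet> b)\<bar> \<le> (norm x)\<^sup>2 + (norm y)\<^sup>2" if "b \<in> Basis" for x y :: 'v and b
    proof -
      have "\<bar>(x \<bullet> b) * (y \<bullet> b)\<bar> \<le> norm x * norm y"
        unfolding abs_mult using Basis_le_norm[OF that, of x] Basis_le_norm[OF that, of y]
        by (intro mult_mono) auto
      also have "\<dots> \<le> (norm x)\<^sup>2 + (norm y)\<^sup>2"
      proof -
        have "0 \<le> (norm x - norm y)\<^sup>2" by simp
        then have "2 * (norm x * norm y) \<le> (norm x)\<^sup>2 + (norm y)\<^sup>2"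
          by (simp add: power2_eq_square algebra_simps)
        moreover have "0 \<le> norm x * norm y" by simp
        ultimately show ?thesis by linarith
      qed
      finally show ?thesis .
    qed
    have iprod: "integrable M (\<lambda>\<omega>. (gradF (w k \<omega>) \<bullet> b) * (gt k \<omega> \<bullet> b))" if "b \<in> Basis" for b
    proof (rule Bochner_Integration.integrable_bound[OF Bochner_Integration.integrable_add[OF iG iN]])
      show "(\<lambda>\<omega>. (gradF (w k \<omega>) \<bullet> b) * (gt k \<omega> \<bullet> b)) \<in> borel_measurable M"
        using gtm gfm by measurable
      show "AE \<omega> in M. norm ((gradF (w k \<omega>) \<bullet> b) * (gt k \<omega> \<bullet> b)) \<le> norm (G \<omega> + N \<omega>)"
        unfolding G_def N_def using prodb[OF that] by (intro AE_I2) simp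
    qed
    have iip: "integrable M ip"
    proof -
      have "integrable M (\<lambda>\<omega>. \<Sum>b\<in>Basis. (gradF (w k \<omega>) \<bullet> b) * (gt k \<omega> \<bullet> b))"
        using iprod by (intro Bochner_Integration.integrable_sum) auto
      then show ?thesis unfolding ip_def by (simp add: euclidean_inner[symmetric])
    qed
    have pw: "h' \<omega> \<le> h \<omega> - a * ip \<omega> + L / 2 * a\<^sup>2 * N \<omega>" if om: "\<omega> \<in> space M" for \<omega>
    proof -
      have e: "w (Suc k) \<omega> - w k \<omega> = - (a *\<^sub>R gt k \<omega>)" using w_step[OF k1 om] unfolding a_def by simp
      have "F (w (Suc k) \<omega>) \<le> F (w k \<omega>) + gradF (w k \<omega>) \<bullet> (- (a *\<^sub>R gt k \<omega>)) + L / 2 * (norm (- (a *\<^sub>R gt k \<omega>)))\<^sup>2"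
        using descent_lemma[OF F_deriv gradF_Lip, where x="w k \<omega>" and y="w (Suc k) \<omega>"] unfolding e .
      then show ?thesis unfolding h_def h'_def ip_def N_def by (simp add: power_mult_distrib)
    qed
    have E1: "integral\<^sup>L M h' \<le> integral\<^sup>L M h - a * integral\<^sup>L M ip + L / 2 * a\<^sup>2 * integral\<^sup>L M N"
    proof -
      have "integral\<^sup>L M h' \<le> (\<integral>\<omega>. h \<omega> - a * ip \<omega> + L / 2 * a\<^sup>2 * N \<omega> \<partial>M)"
        using ih' ih iip iN pw by (intro Bochner_Integration.integral_mono) auto
      also have "\<dots> = integral\<^sup>L M h - a * integral\<^sup>L M ip + L / 2 * a\<^sup>2 * integral\<^sup>L M N"
        using ih iip iN by simp
      finally show ?thesis .
    qed
    define CE where "CE = cond_exp_vec M (Fk k) (gt k)"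
    have CEb: "CE \<omega> \<bullet> b = real_cond_exp M (Fk k) (\<lambda>y. gt k y \<bullet> b) \<omega>" if "b \<in> Basis" for \<omega> b
      unfolding CE_def cond_exp_vec_def using that
      by (simp add: inner_sum_left inner_Basis if_distrib sum.delta cong: if_cong)
    have gbF: "(\<lambda>\<omega>. gradF (w k \<omega>) \<bullet> b) \<in> borel_measurable (Fk k)" for b
      using GF[OF k1] by measurable
    have gtbM: "(\<lambda>\<omega>. gt k \<omega> \<bullet> b) \<in> borel_measurable M" for b using gtm by measurable
    have ceI: "integrable M (\<lambda>\<omega>. (gradF (w k \<omega>) \<bullet> b) * real_cond_exp M (Fk k) (\<lambda>y. gt k y \<bullet> b) \<omega>)"
      and ceE: "(\<integral>\<omega>. (gradF (w k \<omega>) \<bullet> b) * real_cond_exp M (Fk k) (\<lambda>y. gt k y \<bullet> b) \<omega> \<partial>M)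
             = (\<integral>\<omega>. (gradF (w k \<omega>) \<bullet> b) * (gt k \<omega> \<bullet> b) \<partial>M)" if "b \<in> Basis" for b
      using sigma_finite_subalgebra.real_cond_exp_intg[OF Fk_sub iprod[OF that] gbF gtbM] by auto
    have ipCE: "(\<lambda>\<omega>. gradF (w k \<omega>) \<bullet> CE \<omega>)
        = (\<lambda>\<omega>. \<Sum>b\<in>Basis. (gradF (w k \<omega>) \<bullet> b) * real_cond_exp M (Fk k) (\<lambda>y. gt k y \<bullet> b) \<omega>)"
      by (rule ext, subst euclidean_inner) (simp add: CEb)
    have iipCE: "integrable M (\<lambda>\<omega>. gradF (w k \<omega>) \<bullet> CE \<omega>)"
      unfolding ipCE using ceI by (intro Bochner_Integration.integrable_sum) auto
    have intip: "integral\<^sup>L M ip = (\<integral>\<omega>. gradF (w k \<omega>) \<bullet> CE \<omega> \<partial>M)"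
    proof -
      have "integral\<^sup>L M ip = (\<integral>\<omega>. (\<Sum>b\<in>Basis. (gradF (w k \<omega>) \<bullet> b) * (gt k \<omega> \<bullet> b)) \<partial>M)"
        unfolding ip_def by (simp add: euclidean_inner[symmetric])
      also have "\<dots> = (\<Sum>b\<in>Basis. (\<integral>\<omega>. (gradF (w k \<omega>) \<bullet> b) * (gt k \<omega> \<bullet> b) \<partial>M))"
        using iprod by (intro Bochner_Integration.integral_sum) auto
      also have "\<dots> = (\<Sum>b\<in>Basis. (\<integral>\<omega>. (gradF (w k \<omega>) \<bullet> b) * real_cond_exp M (Fk k) (\<lambda>y. gt k y \<bullet> b) \<omega> \<partial>M))"
        using ceE by simp
      also have "\<dots> = (\<integral>\<omega>. gradF (w k \<omega>) \<bullet> CE \<omega> \<partial>M)"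
        unfolding ipCE using ceI by (intro Bochner_Integration.integral_sum[symmetric]) auto
      finally show ?thesis .
    qed
    have E2: "mu_q * integral\<^sup>L M G \<le> integral\<^sup>L M ip"
    proof -
      have "mu_q * integral\<^sup>L M G = (\<integral>\<omega>. mu_q * G \<omega> \<partial>M)" by simp
      also have "\<dots> \<le> (\<integral>\<omega>. gradF (w k \<omega>) \<bullet> CE \<omega> \<partial>M)"
        using iG iipCE assm_b1[OF k1] unfolding mu_q_def G_def CE_def
        by (intro Bochner_Integration.integral_mono_AE) auto
      finally show ?thesis using intip by simp
    qed
    have E3: "integral\<^sup>L M N \<le> Mt + MG * integral\<^sup>L M G"
    proof -
      have "integral\<^sup>L M N = (\<integral>\<omega>. real_cond_exp M (Fk k) N \<omega> \<partial>M)"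
        using sigma_finite_subalgebra.real_cond_exp_int(2)[OF Fk_sub iN] by simp
      also have "\<dots> \<le> (\<integral>\<omega>. Mt + MG * G \<omega> \<partial>M)"
      proof (rule Bochner_Integration.integral_mono_AE)
        show "integrable M (real_cond_exp M (Fk k) N)"
          using sigma_finite_subalgebra.real_cond_exp_int(1)[OF Fk_sub iN] .
        show "integrable M (\<lambda>\<omega>. Mt + MG * G \<omega>)" using iG by simp
        show "AE \<omega> in M. real_cond_exp M (Fk k) N \<omega> \<le> Mt + MG * G \<omega>"
          using assm_c[OF k1] assm_b2[OF k1]
        proof eventually_elim
          case (elim \<omega>)
          have "(norm (CE \<omega>))\<^sup>2 \<le> (qmax * muG * norm (gradF (w k \<omega>)))\<^sup>2"
            using elim(2) unfolding CE_def by (intro power_mono) auto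
          also have "\<dots> = qmax\<^sup>2 * muG\<^sup>2 * G \<omega>" unfolding G_def by (simp add: power_mult_distrib)
          finally show ?case using elim(1) unfolding N_def G_def CE_def MG_def
            by (simp add: algebra_simps)
        qed
      qed
      also have "\<dots> = Mt + MG * integral\<^sup>L M G" using iG by (simp add: P.prob_space)
      finally show ?thesis .
    qed
    have E4: "2 * c * integral\<^sup>L M h \<le> integral\<^sup>L M G"
    proof -
      have "2 * c * integral\<^sup>L M h = (\<integral>\<omega>. 2 * c * h \<omega> \<partial>M)" by simp
      also have "\<dots> \<le> integral\<^sup>L M G"
        using ih iG PL unfolding h_def G_def by (intro Bochner_Integration.integral_mono) auto
      finally show ?thesis .
    qed
    have Gnn: "0 \<le> integral\<^sup>L M G" unfolding G_def by simp
    have apos: "a > 0" unfolding a_def by (rule alpha_pos)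
    have aLMG: "a * L * MG \<le> mu_q" unfolding a_def by (rule alphaLMG[OF k1])
    have acm: "a * c * mu_q \<le> 1" unfolding a_def by (rule alphacm[OF k1])
    define A where "A = integral\<^sup>L M h"
    define B where "B = integral\<^sup>L M G"
    have s1: "integral\<^sup>L M h' \<le> A - a * (mu_q * B) + L / 2 * a\<^sup>2 * (Mt + MG * B)"
    proof -
      have "a * (mu_q * B) \<le> a * integral\<^sup>L M ip" using E2 apos unfolding B_def by simp
      moreover have "L / 2 * a\<^sup>2 * integral\<^sup>L M N \<le> L / 2 * a\<^sup>2 * (Mt + MG * B)"
        using E3 Lpos unfolding B_def by (intro mult_left_mono) auto
      ultimately show ?thesis using E1 unfolding A_def by linarith
    qed
    have s2: "L / 2 * a\<^sup>2 * (MG * B) \<le> a * mu_q * B / 2"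
    proof -
      have "L / 2 * a\<^sup>2 * (MG * B) = (a * L * MG) * (a * B) / 2" by (simp add: power2_eq_square)
      also have "\<dots> \<le> mu_q * (a * B) / 2"
        using aLMG apos Gnn unfolding B_def by (intro divide_right_mono mult_right_mono) auto
      finally show ?thesis by (simp add: mult_ac)
    qed
    have s3: "a * c * mu_q * A \<le> a * mu_q * B / 2"
    proof -
      have "a * mu_q * (2 * c * A) \<le> a * mu_q * B"
        using E4 apos muq_pos unfolding A_def B_def by (intro mult_left_mono) auto
      then show ?thesis by (simp add: algebra_simps)
    qed
    have "integral\<^sup>L M h' \<le> (1 - a * c * mu_q) * A + L * a\<^sup>2 * Mt / 2"
    proof -
      have e1: "L / 2 * a\<^sup>2 * (Mt + MG * B) = L * a\<^sup>2 * Mt / 2 + L / 2 * a\<^sup>2 * (MG * B)"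
        by (simp add: algebra_simps)
      have e2: "a * (mu_q * B) = a * mu_q * B" by simp
      have e3: "(1 - a * c * mu_q) * A = A - a * c * mu_q * A" by (simp add: algebra_simps)
      show ?thesis using s1 s2 s3 e1 e2 e3 by linarith
    qed
    then show ?thesis unfolding a_def A_def h_def h'_def .
  qed
  have nu1: "beta\<^sup>2 * L * Mt / (2 * (beta * c * (qmin * mu) - 1)) \<le> nu_q" unfolding nu_q_def by simp
  have nu2: "(gamma + 1) * (F w1 - F wstar) \<le> nu_q" unfolding nu_q_def by simp
  have nu0: "0 \<le> nu_q"
  proof -
    have "0 \<le> (gamma + 1) * (F w1 - F wstar)"
      using Flow[of w1] gamma_pos unfolding Fstar_def by simp
    then show ?thesis using nu2 by linarith
  qed
  show ?thesis
  proof (intro allI impI)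
    fix k :: nat assume "k \<ge> 1"
    then show "(\<integral>\<omega>. F (w k \<omega>) - Fstar \<partial>M) \<le> nu_q / (gamma + real k)"
    proof (induction k rule: dec_induct)
      case base
      have "(\<integral>\<omega>. F (w 1 \<omega>) - Fstar \<partial>M) = (\<integral>\<omega>. F w1 - Fstar \<partial>M)"
        using w_init by (intro Bochner_Integration.integral_cong) auto
      also have "\<dots> = F w1 - Fstar" by (simp add: P.prob_space)
      also have "\<dots> \<le> nu_q / (gamma + 1)"
        using nu2 gamma_pos unfolding Fstar_def by (simp add: le_divide_eq mult.commute)
      finally show ?case by simp
    next
      case (step k)
      have "(\<integral>\<omega>. F (w (Suc k) \<omega>) - Fstar \<partial>M) \<le> nu_q / ((gamma + real k) + 1)"
      proof (rule recur_step[where a = "alpha k" and beta = beta and c = c and m = "qmin * mu" and L = L and Mt = Mt])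
        show "gamma + real k > 0" using gamma_pos by simp
        show "alpha k = beta / (gamma + real k)" by (rule alpha_def)
        show "0 \<le> 1 - alpha k * c * (qmin * mu)" using alphacm[OF step.hyps(1)] unfolding mu_q_def by simp
        show "beta * c * (qmin * mu) > 1" by (rule bcm)
        show "beta\<^sup>2 * L * Mt / (2 * (beta * c * (qmin * mu) - 1)) \<le> nu_q" by (rule nu1)
        show "0 \<le> nu_q" by (rule nu0)
        show "(\<integral>\<omega>. F (w k \<omega>) - Fstar \<partial>M) \<le> nu_q / (gamma + real k)" by (rule step.IH)
        show "(\<integral>\<omega>. F (w (Suc k) \<omega>) - Fstar \<partial>M) \<le> (1 - alpha k * c * (qmin * mu)) * (\<integral>\<omega>. F (w k \<omega>) - Fstar \<partial>M) + L * (alpha k)\<^sup>2 * Mt / 2"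
          using onestep[OF step.hyps(1)] unfolding mu_q_def .
      qed
      moreover have "(gamma + real k) + 1 = gamma + real (Suc k)" by simp
      ultimately show ?case by metis
    qed
  qed
qed

end
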